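(* Let $(X,\Omega)$ be a measurable space, $\mathcal M$ the set of finite measures on $X$, and $\mathcal N\subset\Omega$ a candidate collection of null sets. Let $\mathcal S=\{\mu\in\mathcal M:\mu(E)=0\text{ for all }E\in\mathcal N\}$ and $\mathcal S^\perp=\{\nu\in\mathcal M:\nu\perp\mu\text{ for all }\mu\in\mathcal S\}$. Then $\mathcal M=\mathcal S\oplus\mathcal S^\perp$, i.e. every $\nu\in\mathcal M$ can be written uniquely as $\nu=\nu_1+\nu_2$ with $\nu_1\in\mathcal S$ and $\nu_2\in\mathcal S^\perp$.
   Context: A collection $\mathcal N\subset\Omega$ is a candidate collection of null sets if (1) $E\in\mathcal N$, $F\in\Omega$, $F\subset E$ imply $F\in\mathcal N$, and (2) the union of any countable subcollection of $\mathcal N$ belongs to $\mathcal N$. $\nu\perp\mu$ denotes mutual singularity. *)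

theory Defs
  imports "HOL-Analysis.Analysis"
begin

definition mutually_singular :: "'a measure \<Rightarrow> 'a measure \<Rightarrow> bool" where
  "mutually_singular \<nu> \<mu> \<longleftrightarrow>
     (\<exists>A \<in> sets \<mu>. emeasure \<nu> A = 0 \<and> emeasure \<mu> (space \<mu> - A) = 0)"

definition candidate_null_sets :: "'a measure \<Rightarrow> 'a set set \<Rightarrow> bool" where
  "candidate_null_sets M Nc \<longleftrightarrow>
     Nc \<subseteq> sets M \<and>
     (\<forall>E F. E \<in> Nc \<and> F \<in> sets M \<and> F \<subseteq> E \<longrightarrow> F \<in> Nc) \<and>
     (\<forall>C. countable C \<and> C \<subseteq> Nc \<longrightarrow> \<Union>C \<in> Nc)"

definition finite_measures_on :: "'a measure \<Rightarrow> 'a measure set" where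
  "finite_measures_on M = {\<nu>. sets \<nu> = sets M \<and> finite_measure \<nu>}"

definition null_respecting :: "'a measure \<Rightarrow> 'a set set \<Rightarrow> 'a measure set" where
  "null_respecting M Nc = {\<mu> \<in> finite_measures_on M. \<forall>E \<in> Nc. emeasure \<mu> E = 0}"

definition singular_complement :: "'a measure \<Rightarrow> 'a set set \<Rightarrow> 'a measure set" where
  "singular_complement M Nc = {\<nu> \<in> finite_measures_on M.
      \<forall>\<mu> \<in> null_respecting M Nc. mutually_singular \<nu> \<mu>}"

end

theory Submission
  imports Defs
begin

lemma ex_max:
  assumes fm: "finite_measure \<nu>" and sub: "Nc \<subseteq> sets \<nu>"
    and cnt: "\<forall>C. countable C \<and> C \<subseteq> Nc \<longrightarrow> \<Union>C \<in> Nc"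
  shows "\<exists>E\<in>Nc. \<forall>F\<in>Nc. measure \<nu> F \<le> measure \<nu> E"
proof -
  interpret finite_measure \<nu> by fact
  have ne: "{} \<in> Nc" using cnt[rule_format, of "{}"] by auto
  define s where "s = Sup (measure \<nu> ` Nc)"
  have bdd: "bdd_above (measure \<nu> ` Nc)"
    using bounded_measure by (auto intro!: bdd_aboveI[of _ "measure \<nu> (space \<nu>)"])
  have "\<forall>n::nat. \<exists>F\<in>Nc. s - 1/Suc n < measure \<nu> F"
  proof
    fix n :: nat
    have lt: "s - 1/Suc n < Sup (measure \<nu> ` Nc)" unfolding s_def by simp
    have "measure \<nu> ` Nc \<noteq> {}" using ne by auto
    from less_cSup_iff[OF this bdd] lt
    show "\<exists>F\<in>Nc. s - 1/Suc n < measure \<nu> F" by blast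
  qed
  then obtain F where F: "\<And>n. F n \<in> Nc" "\<And>n. s - 1/Suc n < measure \<nu> (F n)" by metis
  define E where "E = \<Union>(range F)"
  have E: "E \<in> Nc" unfolding E_def using cnt[rule_format, of "range F"] F(1) by auto
  have "\<And>n. measure \<nu> (F n) \<le> measure \<nu> E"
    using E sub by (intro finite_measure_mono) (auto simp: E_def)
  with F(2) have le: "\<And>n. s - 1/Suc n \<le> measure \<nu> E" by (meson less_le_trans less_imp_le)
  have "(\<lambda>n. s - 1/Suc n) \<longlonglongrightarrow> s - 0"
    by (intro tendsto_diff tendsto_const LIMSEQ_inverse_real_of_nat[unfolded inverse_eq_divide])
  then have "s \<le> measure \<nu> E" using le by (intro LIMSEQ_le_const2) auto
  moreover have "\<And>G. G \<in> Nc \<Longrightarrow> measure \<nu> G \<le> s"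
    unfolding s_def using bdd by (intro cSup_upper) auto
  ultimately show ?thesis using E by force
qed

theorem lemma5p4:
  fixes M :: "'a measure" and Nc :: "'a set set"
  assumes "candidate_null_sets M Nc"
    and "\<nu> \<in> finite_measures_on M"
  shows "\<exists>!p. fst p \<in> null_respecting M Nc \<and> snd p \<in> singular_complement M Nc \<and>
              (\<forall>A \<in> sets M. emeasure \<nu> A = emeasure (fst p) A + emeasure (snd p) A)"
proof -
  have sNc: "Nc \<subseteq> sets M" and dc: "\<And>E F. E \<in> Nc \<Longrightarrow> F \<in> sets M \<Longrightarrow> F \<subseteq> E \<Longrightarrow> F \<in> Nc"
    and cnt: "\<forall>C. countable C \<and> C \<subseteq> Nc \<longrightarrow> \<Union>C \<in> Nc"
    using assms(1) unfolding candidate_null_sets_def by blast+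
  have sv: "sets \<nu> = sets M" and fm: "finite_measure \<nu>"
    using assms(2) unfolding finite_measures_on_def by auto
  have spv: "space \<nu> = space M" using sv by (rule sets_eq_imp_space_eq)
  interpret finite_measure \<nu> by fact
  obtain E where E: "E \<in> Nc" and Emax: "\<And>F. F \<in> Nc \<Longrightarrow> measure \<nu> F \<le> measure \<nu> E"
    using ex_max[OF fm _ cnt] sNc sv by auto
  have EM: "E \<in> sets M" using E sNc by auto
  have null: "emeasure \<nu> (F - E) = 0" if F: "F \<in> Nc" for F
  proof -
    have FM: "F \<in> sets M" using F sNc by auto
    have "\<Union>{F, E} \<in> Nc" using cnt[rule_format, of "{F, E}"] F E by auto
    then have "measure \<nu> (F \<union> E) \<le> measure \<nu> E" using Emax by auto
    moreover have "measure \<nu> (F \<union> E) = measure \<nu> E + measure \<nu> (F - E)"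
      using FM EM sv by (subst finite_measure_Union[symmetric]) (auto intro!: arg_cong[where f="measure \<nu>"])
    ultimately have "measure \<nu> (F - E) = 0" by (simp add: measure_nonneg antisym)
    then show ?thesis using FM EM sv by (simp add: emeasure_eq_measure)
  qed
  define \<nu>1 where "\<nu>1 = density \<nu> (indicator (space M - E))"
  define \<nu>2 where "\<nu>2 = density \<nu> (indicator E)"
  have SE: "space M - E \<in> sets \<nu>" using EM sv by auto
  have e1: "emeasure \<nu>1 A = emeasure \<nu> (A - E)" if "A \<in> sets M" for A
    unfolding \<nu>1_def using that SE sv sets.sets_into_space[OF that]
    by (subst emeasure_restricted) (auto intro!: arg_cong[where f="emeasure \<nu>"])
  have e2: "emeasure \<nu>2 A = emeasure \<nu> (A \<inter> E)" if "A \<in> sets M" for A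
    unfolding \<nu>2_def using that EM sv
    by (subst emeasure_restricted) (auto simp: Int_commute)
  have n1: "\<nu>1 \<in> null_respecting M Nc"
    unfolding null_respecting_def finite_measures_on_def
    using finite_measure_restricted[OF SE] e1 null sNc sv by (auto simp: \<nu>1_def)
  have char: "\<forall>A\<in>sets M. emeasure a2 A = emeasure \<nu> (A \<inter> E) \<and> emeasure a1 A = emeasure \<nu> (A - E)"
    if a1: "a1 \<in> null_respecting M Nc" and a2: "a2 \<in> singular_complement M Nc"
      and dec: "\<forall>A \<in> sets M. emeasure \<nu> A = emeasure a1 A + emeasure a2 A" for a1 a2
  proof
    fix A assume A: "A \<in> sets M"
    have s1: "sets a1 = sets M" and a1E: "emeasure a1 E = 0"
      using a1 E unfolding null_respecting_def finite_measures_on_def by auto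
    have s2: "sets a2 = sets M" and sing: "mutually_singular a2 \<nu>1"
      using a2 n1 unfolding singular_complement_def finite_measures_on_def by auto
    have sp1: "space \<nu>1 = space M" unfolding \<nu>1_def using spv by simp
    have ss1: "sets \<nu>1 = sets M" unfolding \<nu>1_def using sv by simp
    obtain B where B: "B \<in> sets M" "emeasure a2 B = 0" "emeasure \<nu>1 (space M - B) = 0"
      using sing ss1 sp1 unfolding mutually_singular_def by auto
    have AE1: "A \<inter> E \<in> sets M" "A - E \<in> sets M" using A EM by auto
    have le2: "emeasure a2 X \<le> emeasure \<nu> X" if "X \<in> sets M" for X
      using dec that by auto
    have "emeasure a1 (A \<inter> E) \<le> emeasure a1 E" using s1 AE1 EM by (intro emeasure_mono) auto
    then have a1AE: "emeasure a1 (A \<inter> E) = 0" using a1E by simp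
    have "emeasure a2 (A - E) \<le> emeasure a2 ((A - E) \<inter> B) + emeasure a2 ((A - E) - B)"
      using s2 AE1 B by (intro order.trans[OF _ emeasure_subadditive]) (auto intro!: emeasure_mono)
    also have "emeasure a2 ((A - E) \<inter> B) \<le> emeasure a2 B" using s2 AE1 B by (intro emeasure_mono) auto
    also have "emeasure a2 ((A - E) - B) \<le> emeasure \<nu> ((A - E) - B)" using AE1 B by (intro le2) auto
    also have "emeasure \<nu> ((A - E) - B) = emeasure \<nu>1 ((A - E) - B)" using AE1 B by (subst e1) (auto intro!: arg_cong[where f="emeasure \<nu>"])
    also have "\<dots> \<le> emeasure \<nu>1 (space M - B)" using ss1 AE1 B sets.sets_into_space[OF A] by (intro emeasure_mono) auto
    finally have a2AE: "emeasure a2 (A - E) = 0" using B by simp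
    have sp2: "emeasure a2 A = emeasure a2 (A \<inter> E) + emeasure a2 (A - E)"
      using s2 AE1 by (subst plus_emeasure) (auto intro!: arg_cong[where f="emeasure a2"])
    have sp1': "emeasure a1 A = emeasure a1 (A \<inter> E) + emeasure a1 (A - E)"
      using s1 AE1 by (subst plus_emeasure) (auto intro!: arg_cong[where f="emeasure a1"])
    show "emeasure a2 A = emeasure \<nu> (A \<inter> E) \<and> emeasure a1 A = emeasure \<nu> (A - E)"
      using dec AE1 sp2 sp1' a1AE a2AE by simp
  qed
  have n2: "\<nu>2 \<in> singular_complement M Nc"
    unfolding singular_complement_def
  proof safe
    show "\<nu>2 \<in> finite_measures_on M"
      unfolding finite_measures_on_def \<nu>2_def using finite_measure_restricted EM sv by auto
    fix \<mu> assume \<mu>: "\<mu> \<in> null_respecting M Nc"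
    have sm: "sets \<mu> = sets M" and mE: "emeasure \<mu> E = 0"
      using \<mu> E unfolding null_respecting_def finite_measures_on_def by auto
    have spm: "space \<mu> = space M" using sm by (rule sets_eq_imp_space_eq)
    have dj: "(space M - E) \<inter> E = {}" by auto
    have "space M - (space M - E) = E" using sets.sets_into_space[OF EM] by auto
    then show "mutually_singular \<nu>2 \<mu>"
      unfolding mutually_singular_def using sm spm mE EM e2 dj
      by (intro bexI[of _ "space M - E"]) auto
  qed
  have dec: "\<forall>A \<in> sets M. emeasure \<nu> A = emeasure \<nu>1 A + emeasure \<nu>2 A"
  proof
    fix A assume A: "A \<in> sets M"
    then show "emeasure \<nu> A = emeasure \<nu>1 A + emeasure \<nu>2 A"
      using EM sv plus_emeasure[of "A - E" \<nu> "A \<inter> E"]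
      by (simp add: e1 e2 Un_Diff_Int Diff_Int_distrib2 inf_assoc)
  qed
  show ?thesis
  proof (rule ex1I[of _ "(\<nu>1, \<nu>2)"])
    show "fst (\<nu>1, \<nu>2) \<in> null_respecting M Nc \<and> snd (\<nu>1, \<nu>2) \<in> singular_complement M Nc \<and>
      (\<forall>A\<in>sets M. emeasure \<nu> A = emeasure (fst (\<nu>1, \<nu>2)) A + emeasure (snd (\<nu>1, \<nu>2)) A)"
      using n1 n2 dec by simp
    fix p assume p: "fst p \<in> null_respecting M Nc \<and> snd p \<in> singular_complement M Nc \<and>
      (\<forall>A\<in>sets M. emeasure \<nu> A = emeasure (fst p) A + emeasure (snd p) A)"
    then have c: "\<forall>A\<in>sets M. emeasure (snd p) A = emeasure \<nu> (A \<inter> E) \<and> emeasure (fst p) A = emeasure \<nu> (A - E)"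
      using char by blast
    have sf: "sets (fst p) = sets M" "sets (snd p) = sets M"
      using p unfolding null_respecting_def singular_complement_def finite_measures_on_def by auto
    have "fst p = \<nu>1" using c sf e1 by (intro measure_eqI) (auto simp: \<nu>1_def sv)
    moreover have "snd p = \<nu>2" using c sf e2 by (intro measure_eqI) (auto simp: \<nu>2_def sv)
    ultimately show "p = (\<nu>1, \<nu>2)" by (simp add: prod_eq_iff)
  qed
qed

end
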